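(* For $n\ge 0$ let $s_n=\sum_{r=0}^{n}1/r!$. For every positive integer $k$ there exists a constant $n(k)$ such that for all $n\ge n(k)$, among the $k$ consecutive partial sums $s_n, s_{n+1},\dots,s_{n+k-1}$ at most two are convergents of the simple continued fraction expansion of $e$.
   Context: The convergents of $e$ are the rationals obtained by truncating the simple continued fraction expansion of $e$; a partial sum $s_n$ "is a convergent" if it equals one of these rationals. *)

theory Defs
  imports Complex_Main
begin

fun cf_rem :: "real \<Rightarrow> nat \<Rightarrow> real" where
  "cf_rem x 0 = x"
| "cf_rem x (Suc n) = 1 / frac (cf_rem x n)"

definition cf_digit :: "real \<Rightarrow> nat \<Rightarrow> int" where
  "cf_digit x n = \<lfloor>cf_rem x n\<rfloor>"

fun cf_eval :: "int list \<Rightarrow> real" where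
  "cf_eval [] = 0"
| "cf_eval [a] = of_int a"
| "cf_eval (a # b # l) = of_int a + 1 / cf_eval (b # l)"

definition cf_convergent :: "real \<Rightarrow> nat \<Rightarrow> real" where
  "cf_convergent x n = cf_eval (map (cf_digit x) [0..<Suc n])"

definition is_convergent_of :: "real \<Rightarrow> real \<Rightarrow> bool" where
  "is_convergent_of x q \<longleftrightarrow> (\<exists>m. q = cf_convergent x m)"

definition s_e :: "nat \<Rightarrow> real" where
  "s_e n = (\<Sum>r = 0..n. 1 / fact r)"

end

theory Submission
  imports Defs
begin

lemma exp1_sums: "(\<lambda>r. 1 / fact r) sums (exp 1 :: real)"
  using exp_converges[of "1::real"] by (simp add: divide_inverse)

lemma tail_eq: "exp 1 - s_e n = (\<Sum>j. 1 / fact (j + Suc n) :: real)"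
proof -
  have s: "summable (\<lambda>r. 1 / fact r :: real)" using exp1_sums sums_summable by blast
  have "(\<Sum>j. 1 / fact (j + Suc n) :: real) = (\<Sum>r. 1 / fact r) - (\<Sum>i<Suc n. 1 / fact i)"
    using suminf_minus_initial_segment[OF s] by blast
  also have "\<dots> = exp 1 - s_e n"
    using exp1_sums sums_unique s_e_def atLeast0AtMost lessThan_Suc_atMost by metis
  finally show ?thesis by simp
qed

lemma tail_summable: "summable (\<lambda>j. 1 / fact (j + Suc n) :: real)"
  using exp1_sums sums_summable summable_iff_shift by blast

lemma tail_lower: "exp 1 - s_e n \<ge> 1 / fact (Suc n)"
proof -
  have "1 / fact (0 + Suc n) \<le> (\<Sum>j. 1 / fact (j + Suc n) :: real)"
    using sum_le_suminf[OF tail_summable, of "{0}"] by simp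
  then show ?thesis using tail_eq by simp
qed

lemma fact_ge2: "fact (j + Suc n) \<ge> (fact (Suc n) * 2 ^ j :: real)"
proof (induction j)
  case 0 then show ?case by simp
next
  case (Suc j)
  have h: "fact (Suc j + Suc n) = real (Suc (j + Suc n)) * (fact (j + Suc n) :: real)"
    by (simp only: add_Suc fact_Suc of_nat_mult)
  have "(fact (Suc n) :: real) * 2 ^ Suc j = 2 * (fact (Suc n) * 2^j)" by (simp only: power_Suc mult_ac)
  also have "\<dots> \<le> 2 * fact (j + Suc n)" using Suc.IH by (intro mult_left_mono) auto
  also have "\<dots> \<le> real (Suc (j + Suc n)) * (fact (j + Suc n) :: real)"
    by (intro mult_right_mono) auto
  finally show ?case using h by simp
qed

lemma tail_upper: "exp 1 - s_e n \<le> 2 / fact (Suc n)"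
proof -
  have g0: "(\<lambda>j. (1/2::real) ^ j) sums 2" using geometric_sums[of "1/2::real"] by simp
  have g: "(\<lambda>j. (1 / fact (Suc n)) * (1/2) ^ j :: real) sums ((1 / fact (Suc n)) * 2)"
    by (rule sums_mult[OF g0])
  have "(\<Sum>j. 1 / fact (j + Suc n) :: real) \<le> (\<Sum>j. (1 / fact (Suc n)) * (1/2) ^ j)"
  proof (rule suminf_le[OF _ tail_summable sums_summable[OF g]])
    fix j
    have "1 / fact (j + Suc n) \<le> 1 / (fact (Suc n) * 2 ^ j :: real)"
      by (rule divide_left_mono[OF fact_ge2]) auto
    also have "\<dots> = (1 / fact (Suc n)) * (1/2::real) ^ j" by (simp add: power_one_over)
    finally show "1 / fact (j + Suc n) \<le> (1 / fact (Suc n)) * (1/2::real) ^ j" .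
  qed
  then show ?thesis using tail_eq sums_unique[OF g] by simp
qed

definition AA :: "nat \<Rightarrow> nat" where "AA n = (\<Sum>r = 0..n. fact n div fact r)"

lemma AA_real: "real (AA n) = fact n * s_e n"
proof -
  have "real (AA n) = (\<Sum>r = 0..n. real (fact n div fact r))" by (simp add: AA_def)
  also have "\<dots> = (\<Sum>r = 0..n. fact n / fact r)"
    by (intro sum.cong refl) (simp add: real_of_nat_div fact_dvd)
  also have "\<dots> = fact n * s_e n" by (simp add: s_e_def sum_distrib_left)
  finally show ?thesis .
qed

lemma e_irrational: "(exp 1 :: real) \<notin> \<rat>"
proof
  assume "(exp 1::real) \<in> \<rat>"
  then obtain a b where ab: "b > 0" "(exp 1::real) = of_int a / of_int b" using Rats_cases'[OF \<open>(exp 1::real) \<in> \<rat>\<close>] by blast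
  define n where "n = nat b + 1"
  have n2: "n \<ge> 2" using ab(1) n_def by simp
  have "nat b dvd fact n" using ab(1) n_def by (intro dvd_fact) auto
  then obtain c where c: "fact n = nat b * c" by blast
  have fr: "(fact n :: real) = of_int b * of_nat c"
  proof -
    have "(fact n :: real) = of_nat (fact n)" by simp
    also have "\<dots> = of_nat (nat b) * of_nat c" using c by simp
    also have "\<dots> = of_int b * of_nat c" using ab(1) by simp
    finally show ?thesis .
  qed
  have "(fact n :: real) * exp 1 = of_int (a * int c)"
  proof -
    have "(fact n :: real) * exp 1 = of_int b * of_nat c * (of_int a / of_int b)" using fr ab(2) by simp
    also have "\<dots> = of_int a * of_nat c" using ab(1) by simp
    finally show ?thesis by simp
  qed
  then have eq: "fact n * (exp 1 - s_e n) = of_int (a * int c - int (AA n))"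
    using AA_real[of n] by (simp add: right_diff_distrib)
  have "0 < 1 / (fact (Suc n) :: real)" by simp
  then have t: "exp 1 - s_e n > 0" using tail_lower[of n] by linarith
  then have p: "fact n * (exp 1 - s_e n) > 0" by simp
  have m1: "a * int c - int (AA n) > 0" using eq p by (metis of_int_0_less_iff)
  have "fact n * (exp 1 - s_e n) < 1"
  proof -
    have "fact n * (exp 1 - s_e n) \<le> fact n * (2 / fact (Suc n))"
      using tail_upper[of n] by (intro mult_left_mono) auto
    also have "\<dots> = 2 / real (Suc n)" by simp
    also have "\<dots> < 1" using n2 by simp
    finally show ?thesis .
  qed
  then have m2: "a * int c - int (AA n) < 1" using eq by (metis of_int_less_1_iff)
  from m1 m2 show False by linarith
qed

fun cp :: "int \<times> int \<Rightarrow> int list \<Rightarrow> int" and cq :: "int \<times> int \<Rightarrow> int list \<Rightarrow> int" where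
  "cp b [] = fst b"
| "cp b (a # l) = a * cp b l + cq b l"
| "cq b [] = snd b"
| "cq b (a # l) = cp b l"

lemma cf_rem_Suc': "cf_rem x (Suc n) = cf_rem (1 / frac x) n"
  by (induction n) auto

lemma cf_rem_irr: "x \<notin> \<rat> \<Longrightarrow> cf_rem x n \<notin> \<rat>"
proof (induction n)
  case 0 then show ?case by simp
next
  case (Suc n)
  have "frac (cf_rem x n) \<notin> \<rat>"
  proof
    assume "frac (cf_rem x n) \<in> \<rat>"
    then have "frac (cf_rem x n) + of_int \<lfloor>cf_rem x n\<rfloor> \<in> \<rat>" by simp
    then show False using Suc by (simp add: frac_def)
  qed
  then show ?case by (simp add: divide_inverse)
qed

lemma frac_irr: "(y::real) \<notin> \<rat> \<Longrightarrow> 0 < frac y \<and> frac y < 1"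
proof -
  assume "y \<notin> \<rat>"
  then have "y \<notin> \<int>" using Ints_subset_Rats by blast
  then have "frac y \<noteq> 0" by simp
  then show ?thesis using frac_ge_0[of y] frac_lt_1[of y] by linarith
qed

lemma inv_frac_gt1: "(y::real) \<notin> \<rat> \<Longrightarrow> 1 / frac y > 1"
  using frac_irr[of y] by simp

lemma inv_frac_irr: "(y::real) \<notin> \<rat> \<Longrightarrow> 1 / frac y \<notin> \<rat>"
  using cf_rem_irr[of y 1] by simp

lemma digits_Suc:
  "map (cf_digit x) [0..<Suc (Suc m)] = cf_digit x 0 # map (cf_digit (1 / frac x)) [0..<Suc m]"
proof -
  have h: "[0..<Suc (Suc m)] = 0 # map Suc [0..<Suc m]"
    by (simp only: upt_conv_Cons[of 0 "Suc (Suc m)"] map_Suc_upt)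
  have h2: "cf_digit x (Suc i) = cf_digit (1 / frac x) i" for i
    by (simp only: cf_digit_def cf_rem_Suc')
  have "map (cf_digit x) [0..<Suc (Suc m)] = cf_digit x 0 # map (\<lambda>i. cf_digit x (Suc i)) [0..<Suc m]"
    unfolding h by simp
  then show ?thesis using h2 by (simp del: upt_Suc)
qed

lemma main_cf:
  assumes "x \<notin> \<rat>"
  shows "cf_eval (map (cf_digit x) [0..<Suc m]) =
           of_int (cp (1,0) (map (cf_digit x) [0..<Suc m])) / of_int (cq (1,0) (map (cf_digit x) [0..<Suc m]))
       \<and> x = (of_int (cp (1,0) (map (cf_digit x) [0..<Suc m])) * cf_rem x (Suc m) + of_int (cp (0,1) (map (cf_digit x) [0..<Suc m])))
            / (of_int (cq (1,0) (map (cf_digit x) [0..<Suc m])) * cf_rem x (Suc m) + of_int (cq (0,1) (map (cf_digit x) [0..<Suc m])))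
       \<and> \<bar>cp (1,0) (map (cf_digit x) [0..<Suc m]) * cq (0,1) (map (cf_digit x) [0..<Suc m])
           - cp (0,1) (map (cf_digit x) [0..<Suc m]) * cq (1,0) (map (cf_digit x) [0..<Suc m])\<bar> = 1
       \<and> cq (1,0) (map (cf_digit x) [0..<Suc m]) \<ge> 1 \<and> cq (0,1) (map (cf_digit x) [0..<Suc m]) \<ge> 0
       \<and> (x > 1 \<longrightarrow> cp (1,0) (map (cf_digit x) [0..<Suc m]) \<ge> 1 \<and> cp (0,1) (map (cf_digit x) [0..<Suc m]) \<ge> 0)"
  using assms
proof (induction m arbitrary: x)
  case 0
  define a where "a = cf_digit x 0"
  have l: "map (cf_digit x) [0..<Suc 0] = [a]" by (simp add: a_def)
  have fx: "0 < frac x" using frac_irr[OF 0(1)] by simp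
  have xa: "x = of_int a + frac x" by (simp add: a_def cf_digit_def frac_def)
  have t: "cf_rem x (Suc 0) = 1 / frac x" by simp
  have e0: "(of_int a * (1 / frac x) + 1) / (1 / frac x) = of_int a + frac x"
    using fx by (simp add: field_simps)
  have e2: "x = (of_int a * (1 / frac x) + 1) / (1 / frac x)"
    using e0 xa by simp
  have a1: "x > 1 \<Longrightarrow> a \<ge> 1" by (simp add: a_def cf_digit_def)
  show ?case unfolding l t using e2[symmetric] a1 by simp
next
  case (Suc m)
  define a where "a = cf_digit x 0"
  define y where "y = 1 / frac x"
  define ly where "ly = map (cf_digit y) [0..<Suc m]"
  have yirr: "y \<notin> \<rat>" using inv_frac_irr[OF Suc.prems] y_def by simp
  have y1: "y > 1" using inv_frac_gt1[OF Suc.prems] y_def by simp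
  have l: "map (cf_digit x) [0..<Suc (Suc m)] = a # ly" using digits_Suc[of x m] by (simp only: a_def ly_def y_def)
  have t: "cf_rem x (Suc (Suc m)) = cf_rem y (Suc m)" by (simp only: cf_rem_Suc'[of x "Suc m"] y_def)
  define P where "P = cp (1,0) ly"
  define Q where "Q = cq (1,0) ly"
  define P' where "P' = cp (0,1) ly"
  define Q' where "Q' = cq (0,1) ly"
  define T where "T = cf_rem y (Suc m)"
  have IH: "cf_eval ly = of_int P / of_int Q"
      "y = (of_int P * T + of_int P') / (of_int Q * T + of_int Q')"
      "\<bar>P * Q' - P' * Q\<bar> = 1" "Q \<ge> 1" "Q' \<ge> 0" "P \<ge> 1" "P' \<ge> 0"
    using Suc.IH[OF yirr] y1 unfolding P_def Q_def P'_def Q'_def T_def ly_def by auto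
  have T1: "T > 1" unfolding T_def using inv_frac_gt1[OF cf_rem_irr[OF yirr, of m]] by simp
  have ne: "ly \<noteq> []" by (simp add: ly_def)
  have ev: "cf_eval (a # ly) = of_int a + 1 / cf_eval ly"
    using ne by (cases ly) auto
  have xa: "x = of_int a + 1 / y"
    by (simp add: a_def y_def cf_digit_def frac_def)
  have "(of_int P::real) > 0" using IH(6) by simp
  then have "of_int P * T > 0" using T1 by simp
  moreover have "(of_int P'::real) \<ge> 0" using IH(7) by simp
  ultimately have den: "of_int P * T + of_int P' > 0" by linarith
  have e1: "cf_eval (a # ly) = of_int (a * P + Q) / of_int P"
    using ev IH(1,6) by (simp add: field_simps)
  have e2: "x = (of_int (a * P + Q) * T + of_int (a * P' + Q')) / (of_int P * T + of_int P')"
  proof -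
    have "x = of_int a + (of_int Q * T + of_int Q') / (of_int P * T + of_int P')"
      using xa IH(2) by simp
    also have "\<dots> = (of_int (a * P + Q) * T + of_int (a * P' + Q')) / (of_int P * T + of_int P')"
      using den by (simp add: field_simps)
    finally show ?thesis .
  qed
  have e3: "\<bar>(a * P + Q) * P' - (a * P' + Q') * P\<bar> = 1"
  proof -
    have "(a * P + Q) * P' - (a * P' + Q') * P = - (P * Q' - P' * Q)" by (simp add: algebra_simps)
    then show ?thesis using IH(3) by simp
  qed
  have a1: "x > 1 \<Longrightarrow> a \<ge> 1" by (simp add: a_def cf_digit_def)
  have e4: "x > 1 \<Longrightarrow> a * P + Q \<ge> 1 \<and> a * P' + Q' \<ge> 0"
  proof -
    assume "x > 1"
    then have "a \<ge> 1" by (rule a1)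
    then have "a * P \<ge> 0" "a * P' \<ge> 0" using IH(6,7) by simp_all
    then show ?thesis using IH(4-7) by linarith
  qed
  show ?case unfolding l t
    using e1 e2 e3 e4 IH(4-7) unfolding P_def Q_def P'_def Q'_def T_def by simp
qed

lemma conv_approx:
  assumes "x \<notin> \<rat>"
  shows "\<exists>p q :: int. q \<ge> 1 \<and> cf_convergent x m = of_int p / of_int q \<and> \<bar>x - of_int p / of_int q\<bar> \<le> 1 / of_int q ^ 2"
proof -
  define l where "l = map (cf_digit x) [0..<Suc m]"
  define p where "p = cp (1,0) l"
  define q where "q = cq (1,0) l"
  define p' where "p' = cp (0,1) l"
  define q' where "q' = cq (0,1) l"
  define t where "t = cf_rem x (Suc m)"
  have M: "cf_eval l = of_int p / of_int q" "x = (of_int p * t + of_int p') / (of_int q * t + of_int q')"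
      "\<bar>p * q' - p' * q\<bar> = 1" "q \<ge> 1" "q' \<ge> 0"
    using main_cf[OF assms, of m] unfolding l_def p_def q_def p'_def q'_def t_def by auto
  have t1: "t > 1" unfolding t_def using inv_frac_gt1[OF cf_rem_irr[OF assms, of m]] by simp
  have "(of_int q :: real) * t \<ge> of_int q" using M(4) t1 by simp
  moreover have "(of_int q' :: real) \<ge> 0" using M(5) by simp
  ultimately have qq: "of_int q * t + of_int q' \<ge> (of_int q :: real)" by linarith
  have qpos: "(of_int q :: real) > 0" using M(4) by simp
  have qD: "(of_int q :: real) * t + of_int q' > 0" using qq qpos by linarith
  have diff0: "x - of_int p / of_int q = ((of_int p * t + of_int p') * of_int q - of_int p * (of_int q * t + of_int q')) / ((of_int q * t + of_int q') * of_int q)"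
  proof -
    have "x - of_int p / of_int q = (of_int p * t + of_int p') / (of_int q * t + of_int q') - of_int p / of_int q"
      using M(2) by simp
    also have "\<dots> = ((of_int p * t + of_int p') * of_int q - of_int p * (of_int q * t + of_int q')) / ((of_int q * t + of_int q') * of_int q)"
      using qD qpos by (intro diff_frac_eq) auto
    finally show ?thesis .
  qed
  have num: "(of_int p * t + of_int p') * of_int q - of_int p * (of_int q * t + of_int q') = (of_int (p' * q - p * q') :: real)"
    by (simp add: algebra_simps)
  have diff: "x - of_int p / of_int q = of_int (p' * q - p * q') / (of_int q * (of_int q * t + of_int q'))"
    using diff0 num by (simp add: mult.commute)
  have "\<bar>x - of_int p / of_int q\<bar> = 1 / (of_int q * (of_int q * t + of_int q'))"
  proof -
    have z: "\<bar>p' * q - p * q'\<bar> = 1" using M(3) by linarith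
    have "\<bar>(of_int (p' * q - p * q') :: real)\<bar> = of_int \<bar>p' * q - p * q'\<bar>" by (rule of_int_abs[symmetric])
    then have "\<bar>(of_int (p' * q - p * q') :: real)\<bar> = 1" using z by simp
    then show ?thesis using diff qpos qq by (simp add: abs_divide abs_mult)
  qed
  also have "\<dots> \<le> 1 / (of_int q * of_int q)"
    using qpos qq by (intro divide_left_mono mult_left_mono) auto
  also have "\<dots> = 1 / of_int q ^ 2" by (simp add: power2_eq_square)
  finally show ?thesis using M(1,4) unfolding cf_convergent_def l_def by blast
qed

definition gg :: "nat \<Rightarrow> nat" where "gg n = gcd (AA n) (fact n)"

lemma s_e_pos: "s_e n > 0"
  unfolding s_e_def by (intro sum_pos) auto

lemma conv_bound:
  assumes "is_convergent_of (exp 1) (s_e n)"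
  shows "fact n \<le> Suc n * gg n ^ 2"
proof -
  obtain m where m: "s_e n = cf_convergent (exp 1) m" using assms is_convergent_of_def by blast
  obtain p q :: int where pq: "q \<ge> 1" "cf_convergent (exp 1) m = of_int p / of_int q"
      "\<bar>(exp 1::real) - of_int p / of_int q\<bar> \<le> 1 / of_int q ^ 2"
    using conv_approx[OF e_irrational, of m] by blast
  have sp: "s_e n = of_int p / of_int q" using m pq(2) by simp
  have qpos: "(of_int q :: real) > 0" using pq(1) by simp
  have "(of_int p :: real) > 0"
  proof -
    have "of_int p / of_int q > (0::real)" using sp s_e_pos[of n] by simp
    then show ?thesis using qpos by (simp add: zero_less_divide_iff)
  qed
  then have ppos: "p > 0" by simp
  define P where "P = nat p"
  define Q where "Q = nat q"
  have Pr: "(of_int p :: real) = real P" using ppos P_def by simp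
  have Qr: "(of_int q :: real) = real Q" using pq(1) Q_def by simp
  have Q1: "Q \<ge> 1" using pq(1) Q_def by simp
  have "real (AA n) = fact n * (real P / real Q)" using AA_real[of n] sp Pr Qr by simp
  then have "real (AA n) * real Q = fact n * real P" using Q1 by (simp add: field_simps)
  then have "real (AA n * Q) = real (P * fact n)" by (simp add: mult.commute)
  then have eqn: "AA n * Q = P * fact n" by (simp only: of_nat_eq_iff)
  have d1: "fact n dvd Q * AA n" using eqn by (simp add: mult.commute)
  have d2: "fact n dvd Q * fact n" by simp
  have "fact n dvd gcd (Q * AA n) (Q * fact n)" using d1 d2 by (rule gcd_greatest)
  also have "gcd (Q * AA n) (Q * fact n) = Q * gg n" unfolding gg_def by (rule gcd_mult_distrib_nat[symmetric])
  finally have fd: "fact n dvd Q * gg n" .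
  have ggpos: "gg n > 0" by (simp add: gg_def)
  have f1: "fact n \<le> Q * gg n" using fd Q1 ggpos by (intro dvd_imp_le) auto
  have "1 / fact (Suc n) \<le> exp 1 - s_e n" by (rule tail_lower)
  also have "\<dots> \<le> 1 / of_int q ^ 2" using pq(3) sp by simp
  finally have "1 / fact (Suc n) \<le> 1 / (real Q) ^ 2" using Qr by simp
  then have h: "inverse (fact (Suc n)) \<le> inverse ((real Q) ^ 2)" by (simp add: inverse_eq_divide)
  have a: "(0::real) < fact (Suc n)" by simp
  have b: "(0::real) < (real Q) ^ 2" using Q1 by simp
  have "(real Q) ^ 2 \<le> fact (Suc n)" using h inverse_le_iff_le[OF a b] by blast
  then have "real (Q ^ 2) \<le> real (fact (Suc n))" by (simp only: of_nat_power of_nat_fact)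
  then have Q2: "Q ^ 2 \<le> fact (Suc n)" by (simp only: of_nat_le_iff)
  have "fact n * fact n \<le> (Q * gg n) * (Q * gg n)" using f1 by (intro mult_le_mono) auto
  also have "\<dots> = Q ^ 2 * gg n ^ 2" by (simp add: power2_eq_square)
  also have "\<dots> \<le> fact (Suc n) * gg n ^ 2" using Q2 by simp
  also have "\<dots> = fact n * (Suc n * gg n ^ 2)" by (simp add: algebra_simps)
  finally have "fact n * fact n \<le> fact n * (Suc n * gg n ^ 2)" .
  moreover have "0 < (fact n :: nat)" by simp
  ultimately show ?thesis using nat_mult_le_cancel1 by blast
qed

lemma gcd_mult_dvd3: "gcd z (x * y) dvd gcd z x * gcd z (y::nat)"
proof -
  have e1: "gcd z x * gcd z y = gcd (gcd z x * z) (gcd z x * y)" by (rule gcd_mult_distrib_nat)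
  have e2: "gcd z x * z = gcd (z * z) (x * z)" using gcd_mult_distrib_nat[of z z x] by (simp add: mult.commute)
  have e3: "gcd z x * y = gcd (z * y) (x * y)" using gcd_mult_distrib_nat[of y z x] by (simp add: mult.commute)
  have "gcd z (x * y) dvd gcd (z * z) (x * z)" by (intro gcd_greatest) (auto intro: dvd_mult2)
  moreover have "gcd z (x * y) dvd gcd (z * y) (x * y)" by (intro gcd_greatest) (auto intro: dvd_mult2)
  ultimately show ?thesis unfolding e1 e2 e3 by (rule gcd_greatest)
qed

lemma three_prod:
  fixes x y z c :: nat
  assumes "x dvd c" "y dvd c" "z dvd c" "c > 0"
  shows "x * y * z \<le> gcd x y * gcd x z * gcd y z * c"
proof (cases "x = 0 \<or> y = 0 \<or> z = 0")
  case True then show ?thesis by auto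
next
  case False
  then have pos: "x > 0" "y > 0" "z > 0" by auto
  define L where "L = lcm x y"
  have xy: "x * y = gcd x y * L" unfolding L_def by (rule prod_gcd_lcm_nat)
  have Lc: "L dvd c" unfolding L_def using assms by (intro lcm_least)
  have zL: "z * L = gcd z L * lcm z L" by (rule prod_gcd_lcm_nat)
  have lc: "lcm z L dvd c" using assms Lc by (intro lcm_least)
  then have lcb: "lcm z L \<le> c" using assms(4) by (intro dvd_imp_le)
  have "L dvd x * y" unfolding xy by simp
  then have "gcd z L dvd x * y" using gcd_dvd2 dvd_trans by blast
  then have "gcd z L dvd gcd z (x * y)" by (intro gcd_greatest) auto
  also have "\<dots> dvd gcd z x * gcd z y" by (rule gcd_mult_dvd3)
  finally have "gcd z L \<le> gcd z x * gcd z y" using pos by (intro dvd_imp_le) auto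
  then have gl: "gcd z L \<le> gcd x z * gcd y z" by (simp add: gcd.commute)
  have "x * y * z = gcd x y * (z * L)" using xy by (simp add: mult_ac)
  also have "\<dots> = gcd x y * (gcd z L * lcm z L)" using zL by simp
  also have "\<dots> \<le> gcd x y * ((gcd x z * gcd y z) * c)"
    using gl lcb by (intro mult_le_mono mult_le_mono1 mult_le_mono2) auto
  finally show ?thesis by (simp add: mult_ac)
qed

lemma fact_div_real: "r \<le> n \<Longrightarrow> real (fact n div fact r) = fact n / fact r"
  by (simp add: real_of_nat_div fact_dvd)

lemma AA_split:
  assumes "a \<le> b"
  shows "AA b = (fact b div fact a) * AA a + (\<Sum>r = Suc a..b. fact b div fact r)"
proof -
  have U: "{0..b} = {0..a} \<union> {Suc a..b}" using assms by auto
  have "real (AA b) = (\<Sum>r = 0..b. real (fact b div fact r))" by (simp add: AA_def)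
  also have "\<dots> = (\<Sum>r = 0..a. real (fact b div fact r)) + (\<Sum>r = Suc a..b. real (fact b div fact r))"
    unfolding U by (rule sum.union_disjoint) auto
  also have "(\<Sum>r = 0..a. real (fact b div fact r)) = (\<Sum>r = 0..a. (fact b / fact a) * real (fact a div fact r))"
  proof (intro sum.cong refl)
    fix r assume "r \<in> {0..a}"
    then have ra: "r \<le> a" by simp
    then have rb: "r \<le> b" using assms by simp
    show "real (fact b div fact r) = (fact b / fact a) * real (fact a div fact r)"
      using ra rb by (simp add: fact_div_real)
  qed
  also have "\<dots> = (fact b / fact a) * real (AA a)"
    by (simp add: AA_def sum_distrib_left)
  also have "(fact b / fact a :: real) = real (fact b div fact a)" using assms by (simp add: fact_div_real)
  finally have "real (AA b) = real ((fact b div fact a) * AA a + (\<Sum>r = Suc a..b. fact b div fact r))"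
    by simp
  then show ?thesis by (simp only: of_nat_eq_iff)
qed

lemma gcd_gg:
  assumes "a < b" "b \<le> W" "b - a \<le> k"
  shows "gcd (gg a) (gg b) \<le> k * W ^ k"
proof -
  define C :: nat where "C = (\<Sum>r = Suc a..b. fact b div fact r)"
  define d where "d = gcd (gg a) (gg b)"
  have da: "d dvd AA a" unfolding d_def gg_def by (rule dvd_trans[OF gcd_dvd1 gcd_dvd1])
  have db: "d dvd AA b" unfolding d_def gg_def by (rule dvd_trans[OF gcd_dvd2 gcd_dvd1])
  have sp: "AA b = (fact b div fact a) * AA a + C" unfolding C_def using assms(1) by (intro AA_split) simp
  have "d dvd (fact b div fact a) * AA a" using da by simp
  then have dC: "d dvd C" using db sp by (simp add: dvd_add_right_iff)
  have "fact b div fact b \<le> C" unfolding C_def using assms(1) by (intro member_le_sum) auto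
  then have Cpos: "C > 0" by simp
  have W1: "1 \<le> W" using assms by simp
  have "C \<le> of_nat (card {Suc a..b}) * W ^ k"
    unfolding C_def
  proof (rule sum_bounded_above)
    fix r assume r: "r \<in> {Suc a..b}"
    then have "fact b div fact (b - (b - r)) \<le> b ^ (b - r)" by (intro fact_div_fact_le_pow) simp
    also have "\<dots> \<le> W ^ (b - r)" using assms(2) by (intro power_mono) auto
    also have "\<dots> \<le> W ^ k" using W1 r assms(3) by (intro power_increasing) auto
    finally show "fact b div fact r \<le> W ^ k" using r by simp
  qed
  also have "\<dots> \<le> k * W ^ k" using assms(3) by (intro mult_le_mono1) simp
  finally have "C \<le> k * W ^ k" .
  moreover have "d \<le> C" using dC Cpos by (rule dvd_imp_le)
  ultimately show ?thesis unfolding d_def by linarith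
qed

lemma exp_series: "(\<lambda>n. x ^ n / fact n) sums (exp x :: real)"
  using exp_converges[of x] by (simp add: divide_inverse mult.commute)

lemma pow_le_exp:
  assumes "(x::real) \<ge> 0"
  shows "x ^ D / fact D \<le> exp x"
proof -
  have "(\<Sum>n\<in>{D}. x ^ n / fact n) \<le> (\<Sum>n. x ^ n / fact n)"
    by (rule sum_le_suminf) (use assms exp_series sums_summable in auto)
  then show ?thesis using sums_unique[OF exp_series[of x]] by simp
qed

lemma fact_poly: "\<exists>N. \<forall>n\<ge>N. K * (n + k) ^ D < (fact n :: nat)"
proof -
  define M where "M = real K * fact D * exp (real k) + 1"
  have "real K * fact D * exp (real k) \<ge> 0" by simp
  then have Mpos: "M > 0" unfolding M_def by linarith
  have sm: "summable (\<lambda>n. exp 1 ^ n / fact n :: real)" using exp_series sums_summable by blast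
  have lim: "(\<lambda>n. exp 1 ^ n / fact n :: real) \<longlonglongrightarrow> 0" by (rule summable_LIMSEQ_zero[OF sm])
  have "\<forall>\<^sub>F n in sequentially. exp 1 ^ n / fact n < 1 / M"
    using order_tendstoD(2)[OF lim] Mpos by simp
  then obtain N where N: "\<And>n. n \<ge> N \<Longrightarrow> exp 1 ^ n / fact n < 1 / M"
    unfolding eventually_sequentially by blast
  show ?thesis
  proof (intro exI allI impI)
    fix n assume "n \<ge> N"
    then have h: "exp 1 ^ n / fact n < 1 / M" by (rule N)
    have en: "exp 1 ^ n = exp (real n)" using exp_of_nat_mult[of n "1::real"] by simp
    have h2: "M * exp (real n) < fact n" using h Mpos en by (simp add: field_simps)
    have "real (n + k) ^ D / fact D \<le> exp (real (n + k))" by (rule pow_le_exp) simp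
    then have "real (n + k) ^ D \<le> fact D * exp (real (n + k))" by (simp add: field_simps)
    also have "exp (real (n + k)) = exp (real k) * exp (real n)" by (simp add: exp_add)
    finally have p: "real (n + k) ^ D \<le> fact D * (exp (real k) * exp (real n))" .
    have "real (K * (n + k) ^ D) = real K * real (n + k) ^ D" by simp
    also have "\<dots> \<le> real K * (fact D * (exp (real k) * exp (real n)))"
      using p by (intro mult_left_mono) auto
    also have "\<dots> = (M - 1) * exp (real n)" unfolding M_def by (simp add: algebra_simps)
    also have "\<dots> < M * exp (real n)" by (simp add: algebra_simps)
    also have "\<dots> < fact n" by (rule h2)
    finally have "real (K * (n + k) ^ D) < real (fact n)" by simp
    then show "K * (n + k) ^ D < fact n" by (simp only: of_nat_less_iff)
  qed
qed

lemma three_elems: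
  fixes S :: "nat set"
  assumes "finite S" "card S \<ge> 3"
  shows "\<exists>a b c. a \<in> S \<and> b \<in> S \<and> c \<in> S \<and> a < b \<and> b < c"
proof -
  have ne: "S \<noteq> {}" using assms by auto
  define a where "a = Min S"
  have aS: "a \<in> S" unfolding a_def using assms ne by simp
  define S1 where "S1 = S - {a}"
  have c1: "card S1 \<ge> 2" unfolding S1_def using assms aS by simp
  have f1: "finite S1" unfolding S1_def using assms by simp
  have ne1: "S1 \<noteq> {}" using c1 by auto
  define b where "b = Min S1"
  have bS: "b \<in> S1" unfolding b_def using f1 ne1 by simp
  define S2 where "S2 = S1 - {b}"
  have c2: "card S2 \<ge> 1" unfolding S2_def using c1 f1 bS by simp
  then obtain c where cS: "c \<in> S2" by (metis card.empty all_not_in_conv not_one_le_zero)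
  have ab: "a < b"
  proof -
    have "a \<le> b" unfolding a_def using assms bS S1_def by simp
    moreover have "a \<noteq> b" using bS S1_def by auto
    ultimately show ?thesis by simp
  qed
  have bc: "b < c"
  proof -
    have "b \<le> c" unfolding b_def using f1 cS S2_def by simp
    moreover have "b \<noteq> c" using cS S2_def by auto
    ultimately show ?thesis by simp
  qed
  show ?thesis using aS bS cS ab bc S1_def S2_def by blast
qed

lemma no_three:
  fixes n k a b c :: nat
  assumes ab: "a < b" and bc: "b < c" and na: "n \<le> a" and cW: "c < n + k"
    and ca: "is_convergent_of (exp 1) (s_e a)" and cb: "is_convergent_of (exp 1) (s_e b)"
    and cc: "is_convergent_of (exp 1) (s_e c)"
  shows "fact n \<le> k ^ 6 * (n + k) ^ (7 * k + 3)"
proof -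
  define W where "W = n + k"
  define G where "G = k * W ^ k"
  define x where "x = gg a"
  define y where "y = gg b"
  define z where "z = gg c"
  have fa: "fact a \<le> W * x ^ 2"
  proof -
    have "fact a \<le> Suc a * gg a ^ 2" by (rule conv_bound[OF ca])
    also have "\<dots> \<le> W * x ^ 2" unfolding x_def W_def using ab bc cW by (intro mult_le_mono1) simp
    finally show ?thesis .
  qed
  have fb: "fact b \<le> W * y ^ 2"
  proof -
    have "fact b \<le> Suc b * gg b ^ 2" by (rule conv_bound[OF cb])
    also have "\<dots> \<le> W * y ^ 2" unfolding y_def W_def using bc cW by (intro mult_le_mono1) simp
    finally show ?thesis .
  qed
  have fc: "fact c \<le> W * z ^ 2"
  proof -
    have "fact c \<le> Suc c * gg c ^ 2" by (rule conv_bound[OF cc])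
    also have "\<dots> \<le> W * z ^ 2" unfolding z_def W_def using cW by (intro mult_le_mono1) simp
    finally show ?thesis .
  qed
  have gxy: "gcd x y \<le> G" unfolding x_def y_def G_def using ab bc na cW W_def by (intro gcd_gg) auto
  have gxz: "gcd x z \<le> G" unfolding x_def z_def G_def using ab bc na cW W_def by (intro gcd_gg) auto
  have gyz: "gcd y z \<le> G" unfolding y_def z_def G_def using ab bc na cW W_def by (intro gcd_gg) auto
  have dvx: "x dvd fact c" unfolding x_def gg_def using ab bc
    by (meson dvd_trans gcd_dvd2 fact_dvd less_imp_le less_trans)
  have dvy: "y dvd fact c" unfolding y_def gg_def using bc
    by (meson dvd_trans gcd_dvd2 fact_dvd less_imp_le)
  have dvz: "z dvd fact c" unfolding z_def gg_def by simp
  have "x * y * z \<le> gcd x y * gcd x z * gcd y z * fact c"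
    by (rule three_prod[OF dvx dvy dvz]) simp
  also have "\<dots> \<le> G * G * G * fact c" using gxy gxz gyz by (intro mult_le_mono mult_le_mono1) auto
  finally have xyz: "x * y * z \<le> G * G * G * fact c" .
  have cb': "fact c \<le> fact b * W ^ k"
  proof -
    have dv: "fact b dvd (fact c :: nat)" using bc by (simp add: fact_dvd)
    have "fact c div fact (c - (c - b)) \<le> c ^ (c - b)" by (rule fact_div_fact_le_pow) simp
    then have "fact c div fact b \<le> c ^ (c - b)" using bc by simp
    also have "\<dots> \<le> W ^ (c - b)" using cW W_def by (intro power_mono) auto
    also have "\<dots> \<le> W ^ k" using cW W_def na ab bc by (intro power_increasing) auto
    finally have "fact c div fact b \<le> W ^ k" .
    moreover have "(fact c :: nat) = fact b * (fact c div fact b)" using dv by simp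
    ultimately show ?thesis by (metis mult_le_mono2)
  qed
  have "fact a * fact b * fact c \<le> (W * x ^ 2) * (W * y ^ 2) * (W * z ^ 2)"
    using fa fb fc by (intro mult_le_mono) auto
  also have "\<dots> = W ^ 3 * (x * y * z) ^ 2" by (simp add: power2_eq_square power3_eq_cube mult_ac)
  also have "\<dots> \<le> W ^ 3 * (G * G * G * fact c) ^ 2" using xyz by (intro mult_le_mono2 power_mono) auto
  also have "\<dots> = (W ^ 3 * G ^ 6 * fact c) * fact c" by (simp add: power2_eq_square eval_nat_numeral mult_ac)
  also have "\<dots> \<le> (W ^ 3 * G ^ 6 * (fact b * W ^ k)) * fact c" using cb' by (intro mult_le_mono1 mult_le_mono2)
  also have "\<dots> = (W ^ 3 * G ^ 6 * W ^ k) * (fact b * fact c)" by (simp add: mult_ac)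
  finally have "fact a * (fact b * fact c) \<le> (W ^ 3 * G ^ 6 * W ^ k) * (fact b * fact c)"
    by (simp add: mult_ac)
  moreover have "(0::nat) < fact b * fact c" by simp
  ultimately have fa2: "fact a \<le> W ^ 3 * G ^ 6 * W ^ k" by simp
  have "W ^ 3 * G ^ 6 * W ^ k = k ^ 6 * W ^ (7 * k + 3)"
  proof -
    have e1: "G ^ 6 = k ^ 6 * W ^ (6 * k)" unfolding G_def
      by (simp only: power_mult_distrib power_mult[symmetric] mult.commute[of k 6])
    have e2: "7 * k + 3 = 3 + 6 * k + k" by simp
    have e3: "W ^ (7 * k + 3) = W ^ 3 * W ^ (6 * k) * W ^ k" by (simp only: e2 power_add)
    show ?thesis unfolding e1 e3 by (simp only: mult_ac)
  qed
  then have "fact a \<le> k ^ 6 * W ^ (7 * k + 3)" using fa2 by simp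
  moreover have "fact n \<le> (fact a :: nat)" using na by (rule fact_mono)
  ultimately show ?thesis unfolding W_def by simp
qed

theorem theorem3p2:
  fixes k :: nat
  assumes "k > 0"
  shows "\<exists>N. \<forall>n \<ge> N. card {i. i < k \<and> is_convergent_of (exp 1) (s_e (n + i))} \<le> 2"
proof -
  obtain N where N: "\<And>n. n \<ge> N \<Longrightarrow> k ^ 6 * (n + k) ^ (7 * k + 3) < (fact n :: nat)"
    using fact_poly[of "k ^ 6" k "7 * k + 3"] by blast
  show ?thesis
  proof (intro exI allI impI)
    fix n assume nN: "n \<ge> N"
    define S where "S = {i. i < k \<and> is_convergent_of (exp 1) (s_e (n + i))}"
    have fin: "finite S" unfolding S_def by simp
    show "card {i. i < k \<and> is_convergent_of (exp 1) (s_e (n + i))} \<le> 2"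
      unfolding S_def[symmetric]
    proof (rule ccontr)
      assume "\<not> card S \<le> 2"
      then have "card S \<ge> 3" by simp
      then obtain i j l where ijl: "i \<in> S" "j \<in> S" "l \<in> S" "i < j" "j < l"
        using three_elems[OF fin] by blast
      have "fact n \<le> k ^ 6 * (n + k) ^ (7 * k + 3)"
        by (rule no_three[of "n + i" "n + j" "n + l"]) (use ijl S_def in auto)
      then show False using N[OF nN] by simp
    qed
  qed
qed

end
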